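(* Let $\ell_n>0$, $\sigma_{n,0}>0$, $\sigma_{n,1}\ge0$, $\sigma_{n,-1}\ge0$, $\kappa_n\in\mathbb R$ for $n\in\mathbb N$, and assume $$\limsup_{n\to\infty}\sigma_{n,1}<\infty,\quad \liminf_{n\to\infty}\sigma_{n,0}>0,\quad \limsup_{n\to\infty}\sigma_{n,-1}<\infty,$$ $$0<\liminf_{n\to\infty}\sqrt{\ell_{n+1}/\ell_n}\le\limsup_{n\to\infty}\sqrt{\ell_{n+1}/\ell_n}<\infty,\qquad \limsup_{n\to\infty}\frac{|\kappa_n|}{\sqrt{\ell_n}}<\infty .$$ If a real sequence $(x_n)_{n\in\mathbb N}$ (with some $x_0\in\mathbb R$) satisfies $$\ell_n = x_n\big(\sigma_{n,1}x_{n+1}+\sigma_{n,0}x_n+\sigma_{n,-1}x_{n-1}\big)+\kappa_n x_n,\qquad n\in\mathbb N,$$ then $\liminf_{n\to\infty}x_n/\sqrt{\ell_n}>-\infty$ if and only if $\limsup_{n\to\infty}x_n/\sqrt{\ell_n}<\infty$.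
   Context: $\mathbb N=\{1,2,3,\dots\}$. The sequence $(x_n)$ need not be positive. *)

theory Defs
  imports "HOL-Analysis.Analysis"
begin

end

theory Submission
  imports Defs
begin

lemma ev_upper:
  fixes f :: "nat \<Rightarrow> real"
  assumes "limsup (\<lambda>n. ereal (f n)) < \<infinity>"
  shows "\<exists>B\<ge>0. \<forall>\<^sub>F n in sequentially. f n \<le> B"
proof -
  obtain k :: nat where k: "limsup (\<lambda>n. ereal (f n)) < ereal (real k)"
    using assms less_PInf_Ex_of_nat by auto
  have "\<forall>\<^sub>F n in sequentially. ereal (f n) < ereal (real k)"
    using Limsup_lessD[OF k] .
  then have "\<forall>\<^sub>F n in sequentially. f n \<le> real k"
    by (rule eventually_mono) auto
  then show ?thesis by (intro exI[of _ "real k"]) auto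
qed

lemma ev_lower:
  fixes f :: "nat \<Rightarrow> real"
  assumes "liminf (\<lambda>n. ereal (f n)) > -\<infinity>"
  shows "\<exists>B. \<forall>\<^sub>F n in sequentially. B \<le> f n"
proof -
  obtain B where B: "ereal B < liminf (\<lambda>n. ereal (f n))"
  proof (cases "liminf (\<lambda>n. ereal (f n))")
    case (real r) then show ?thesis using that[of "r - 1"] by auto
  next
    case PInf then show ?thesis using that[of 0] by auto
  next
    case MInf then show ?thesis using assms by auto
  qed
  have "\<forall>\<^sub>F n in sequentially. ereal (f n) > ereal B"
    using less_LiminfD[OF B] .
  then have "\<forall>\<^sub>F n in sequentially. B \<le> f n"
    by (rule eventually_mono) auto
  then show ?thesis by blast
qed

lemma ev_pos:
  fixes f :: "nat \<Rightarrow> real"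
  assumes "liminf (\<lambda>n. ereal (f n)) > 0"
  shows "\<exists>c>0. \<forall>\<^sub>F n in sequentially. c \<le> f n"
proof -
  obtain c where c: "ereal c < liminf (\<lambda>n. ereal (f n))" "c > 0"
  proof (cases "liminf (\<lambda>n. ereal (f n))")
    case (real r) then show ?thesis using that[of "r / 2"] assms by auto
  next
    case PInf then show ?thesis using that[of 1] by auto
  next
    case MInf then show ?thesis using assms by auto
  qed
  have "\<forall>\<^sub>F n in sequentially. ereal (f n) > ereal c"
    using less_LiminfD[OF c(1)] .
  then have "\<forall>\<^sub>F n in sequentially. c \<le> f n"
    by (rule eventually_mono) auto
  then show ?thesis using c(2) by blast
qed

lemma core:
  fixes L xn B c D :: real
  assumes L: "L > 0" and c: "c > 0" and xn: "xn > 0" and D: "D \<ge> 0"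
    and eq: "L^2 = xn * B" and Bge: "B \<ge> c * xn - D * L"
  shows "xn / L \<le> (D + 1) / c + 1"
proof (rule ccontr)
  define y where "y = xn / L"
  have xy: "xn = y * L" using L unfolding y_def by simp
  assume "\<not> xn / L \<le> (D + 1) / c + 1"
  then have yM: "y > (D + 1) / c + 1" unfolding y_def by simp
  have "(D + 1) / c \<ge> 0" using c D by simp
  then have y1: "y > 1" using yM by linarith
  have "c * y > c * ((D + 1) / c + 1)" using yM c by simp
  also have "c * ((D + 1) / c + 1) = D + 1 + c" using c by (simp add: field_simps)
  finally have g: "c * y - D > 1" using c by simp
  have "B \<ge> L * (c * y - D)" using Bge xy by (simp add: algebra_simps)
  then have "xn * B \<ge> (y * L) * (L * (c * y - D))"
    using xy xn by (simp add: mult_left_mono)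
  moreover have "(y * L) * (L * (c * y - D)) = L^2 * (y * (c * y - D))"
    by (simp add: power2_eq_square algebra_simps)
  moreover have "y * (c * y - D) > 1 * 1" using y1 g
    by (intro mult_strict_mono) auto
  moreover have "L^2 > 0" using L by simp
  ultimately have "L^2 > L^2 * 1" using eq
    by (metis mult_strict_left_mono mult.right_neutral order_less_le_trans)
  then show False by simp
qed

lemma one_dir:
  fixes l s1 s0 sm1 \<kappa> x :: "nat \<Rightarrow> real" and N :: nat
  assumes l_pos: "\<And>n. n \<ge> 1 \<Longrightarrow> l n > 0"
    and s1_nonneg: "\<And>n. n \<ge> 1 \<Longrightarrow> s1 n \<ge> 0"
    and sm1_nonneg: "\<And>n. n \<ge> 1 \<Longrightarrow> sm1 n \<ge> 0"
    and S: "S \<ge> 0" "\<And>n. n \<ge> N \<Longrightarrow> s1 n \<le> S" "\<And>n. n \<ge> N \<Longrightarrow> sm1 n \<le> S"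
    and c: "c > 0" "\<And>n. n \<ge> N \<Longrightarrow> c \<le> s0 n"
    and \<rho>: "\<rho> > 0" "\<And>n. n \<ge> N \<Longrightarrow> \<rho> \<le> sqrt (l (n + 1) / l n)"
    and R: "R \<ge> 0" "\<And>n. n \<ge> N \<Longrightarrow> sqrt (l (n + 1) / l n) \<le> R"
    and K: "K \<ge> 0" "\<And>n. n \<ge> N \<Longrightarrow> \<bar>\<kappa> n\<bar> / sqrt (l n) \<le> K"
    and C: "C \<ge> 0" "\<And>n. n \<ge> N \<Longrightarrow> - C * sqrt (l n) \<le> x n"
    and rec: "\<And>n. n \<ge> 1 \<Longrightarrow>
       l n = x n * (s1 n * x (n + 1) + s0 n * x n + sm1 n * x (n - 1)) + \<kappa> n * x n"
  shows "\<exists>M. \<forall>n \<ge> N + 2. x n / sqrt (l n) \<le> M"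
proof -
  define D where "D = S * C * R + S * C / \<rho> + K"
  have D0: "D \<ge> 0" unfolding D_def using S C R K \<rho> by simp
  show ?thesis
  proof (intro exI allI impI)
    fix n assume n: "N + 2 \<le> n"
    define L where "L = sqrt (l n)"
    define Lp where "Lp = sqrt (l (n + 1))"
    define Lm where "Lm = sqrt (l (n - 1))"
    have ln: "l n > 0" using l_pos n by simp
    have lp: "l (n + 1) > 0" using l_pos n by simp
    have lm: "l (n - 1) > 0" using l_pos n by simp
    have L0: "L > 0" using ln unfolding L_def by simp
    have Lm0: "Lm > 0" using lm unfolding Lm_def by simp
    have Lp0: "Lp > 0" using lp unfolding Lp_def by simp
    have "Lp = sqrt (l (n + 1) / l n) * L"
      unfolding Lp_def L_def using ln by (simp add: real_sqrt_divide)
    then have LpR: "Lp \<le> R * L" using R(2)[of n] n L0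
      by (simp add: mult_right_mono)
    have "L = sqrt (l (n - 1 + 1) / l (n - 1)) * Lm"
      unfolding Lm_def L_def using lm n by (simp add: real_sqrt_divide)
    then have "L \<ge> \<rho> * Lm" using \<rho>(2)[of "n - 1"] n Lm0
      by (simp add: mult_right_mono)
    then have LmR: "Lm \<le> L / \<rho>" using \<rho>(1) by (simp add: field_simps)
    have kap: "\<bar>\<kappa> n\<bar> \<le> K * L" using K(2)[of n] n L0 unfolding L_def
      by (simp add: divide_le_eq)
    show "x n / sqrt (l n) \<le> (D + 1) / c + 1"
    proof (cases "x n > 0")
      case False
      then have "x n / sqrt (l n) \<le> 0" using ln by (simp add: divide_nonpos_pos)
      moreover have "(D + 1) / c \<ge> 0" using D0 c by simp
      ultimately show ?thesis by linarith
    next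
      case True
      define B where "B = s1 n * x (n + 1) + s0 n * x n + sm1 n * x (n - 1) + \<kappa> n"
      have eq: "L^2 = x n * B" unfolding L_def B_def using rec[of n] n ln
        by (simp add: algebra_simps)
      have s1n: "0 \<le> s1 n" "s1 n \<le> S" using s1_nonneg S n by auto
      have sm1n: "0 \<le> sm1 n" "sm1 n \<le> S" using sm1_nonneg S n by auto
      have xp: "x (n + 1) \<ge> - C * Lp" using C(2)[of "n+1"] n unfolding Lp_def by simp
      have xm: "x (n - 1) \<ge> - C * Lm" using C(2)[of "n-1"] n unfolding Lm_def by simp
      have "C * Lp \<le> C * (R * L)" by (rule mult_left_mono[OF LpR C(1)])
      then have "x (n + 1) \<ge> - (C * (R * L))" using xp by simp
      then have "s1 n * x (n + 1) \<ge> s1 n * (- (C * (R * L)))"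
        by (rule mult_left_mono) (use s1n in simp)
      moreover have "s1 n * (C * (R * L)) \<le> S * (C * (R * L))"
        using s1n C(1) R(1) L0 by (intro mult_right_mono) auto
      ultimately have t1: "s1 n * x (n + 1) \<ge> - (S * C * R * L)" by (simp add: algebra_simps)
      have "C * Lm \<le> C * (L / \<rho>)" by (rule mult_left_mono[OF LmR C(1)])
      then have "x (n - 1) \<ge> - (C * (L / \<rho>))" using xm by simp
      then have "sm1 n * x (n - 1) \<ge> sm1 n * (- (C * (L / \<rho>)))"
        by (rule mult_left_mono) (use sm1n in simp)
      moreover have "sm1 n * (C * (L / \<rho>)) \<le> S * (C * (L / \<rho>))"
        using sm1n C(1) \<rho>(1) L0 by (intro mult_right_mono) auto
      ultimately have t2: "sm1 n * x (n - 1) \<ge> - (S * C / \<rho> * L)" by (simp add: algebra_simps)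
      have t3: "s0 n * x n \<ge> c * x n" using c(2)[of n] n True by (simp add: mult_right_mono)
      have t4: "\<kappa> n \<ge> - (K * L)" using kap by linarith
      have "B \<ge> c * x n - D * L" unfolding B_def D_def using t1 t2 t3 t4
        by (simp add: algebra_simps)
      then show ?thesis using core[OF L0 c(1) True D0 eq] unfolding L_def by simp
    qed
  qed
qed

theorem corollary6p2:
  fixes l s1 s0 sm1 \<kappa> x :: "nat \<Rightarrow> real"
  assumes l_pos: "\<And>n. n \<ge> 1 \<Longrightarrow> l n > 0"
    and s0_pos: "\<And>n. n \<ge> 1 \<Longrightarrow> s0 n > 0"
    and s1_nonneg: "\<And>n. n \<ge> 1 \<Longrightarrow> s1 n \<ge> 0"
    and sm1_nonneg: "\<And>n. n \<ge> 1 \<Longrightarrow> sm1 n \<ge> 0"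
    and lim_s1: "limsup (\<lambda>n. ereal (s1 n)) < \<infinity>"
    and lim_s0: "liminf (\<lambda>n. ereal (s0 n)) > 0"
    and lim_sm1: "limsup (\<lambda>n. ereal (sm1 n)) < \<infinity>"
    and lim_ratio_low: "liminf (\<lambda>n. ereal (sqrt (l (n + 1) / l n))) > 0"
    and lim_ratio_up: "limsup (\<lambda>n. ereal (sqrt (l (n + 1) / l n))) < \<infinity>"
    and lim_kappa: "limsup (\<lambda>n. ereal (\<bar>\<kappa> n\<bar> / sqrt (l n))) < \<infinity>"
    and rec: "\<And>n. n \<ge> 1 \<Longrightarrow>
       l n = x n * (s1 n * x (n + 1) + s0 n * x n + sm1 n * x (n - 1)) + \<kappa> n * x n"
  shows "liminf (\<lambda>n. ereal (x n / sqrt (l n))) > -\<infinity> \<longleftrightarrow>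
         limsup (\<lambda>n. ereal (x n / sqrt (l n))) < \<infinity>"
proof -
  obtain S1 where S1: "S1 \<ge> 0" "\<forall>\<^sub>F n in sequentially. s1 n \<le> S1"
    using ev_upper[OF lim_s1] by blast
  obtain S2 where S2: "S2 \<ge> 0" "\<forall>\<^sub>F n in sequentially. sm1 n \<le> S2"
    using ev_upper[OF lim_sm1] by blast
  obtain c where c: "c > 0" "\<forall>\<^sub>F n in sequentially. c \<le> s0 n"
    using ev_pos[OF lim_s0] by blast
  obtain \<rho> where \<rho>: "\<rho> > 0" "\<forall>\<^sub>F n in sequentially. \<rho> \<le> sqrt (l (n + 1) / l n)"
    using ev_pos[OF lim_ratio_low] by blast
  obtain R where R: "R \<ge> 0" "\<forall>\<^sub>F n in sequentially. sqrt (l (n + 1) / l n) \<le> R"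
    using ev_upper[OF lim_ratio_up] by blast
  obtain K where K: "K \<ge> 0" "\<forall>\<^sub>F n in sequentially. \<bar>\<kappa> n\<bar> / sqrt (l n) \<le> K"
    using ev_upper[OF lim_kappa] by blast
  define S where "S = max S1 S2"
  have ev: "\<forall>\<^sub>F n in sequentially. s1 n \<le> S \<and> sm1 n \<le> S \<and> c \<le> s0 n \<and>
      \<rho> \<le> sqrt (l (n + 1) / l n) \<and> sqrt (l (n + 1) / l n) \<le> R \<and>
      \<bar>\<kappa> n\<bar> / sqrt (l n) \<le> K \<and> n \<ge> 1"
    using S1(2) S2(2) c(2) \<rho>(2) R(2) K(2) eventually_ge_at_top[of 1]
    unfolding S_def by eventually_elim auto
  have S0: "S \<ge> 0" unfolding S_def using S1 by simp
  show ?thesis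
  proof
    assume "liminf (\<lambda>n. ereal (x n / sqrt (l n))) > -\<infinity>"
    from ev_lower[OF this] obtain B where
      B: "\<forall>\<^sub>F n in sequentially. B \<le> x n / sqrt (l n)" by blast
    from eventually_conj[OF ev B] obtain N where
      N: "\<And>n. n \<ge> N \<Longrightarrow> (s1 n \<le> S \<and> sm1 n \<le> S \<and> c \<le> s0 n \<and>
      \<rho> \<le> sqrt (l (n + 1) / l n) \<and> sqrt (l (n + 1) / l n) \<le> R \<and>
      \<bar>\<kappa> n\<bar> / sqrt (l n) \<le> K \<and> n \<ge> 1) \<and> B \<le> x n / sqrt (l n)"
      unfolding eventually_sequentially by blast
    define C where "C = max 0 (- B)"
    have C0: "C \<ge> 0" unfolding C_def by simp
    have Cx: "- C * sqrt (l n) \<le> x n" if "n \<ge> N" for n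
    proof -
      have ln: "l n > 0" using N[OF that] l_pos by blast
      have "B * sqrt (l n) \<le> x n" using N[OF that] ln by (simp add: pos_le_divide_eq)
      moreover have "- C * sqrt (l n) \<le> B * sqrt (l n)" unfolding C_def using ln
        by (intro mult_right_mono) auto
      ultimately show ?thesis by linarith
    qed
    have Na: "\<And>n. n \<ge> N \<Longrightarrow> s1 n \<le> S" "\<And>n. n \<ge> N \<Longrightarrow> sm1 n \<le> S"
      "\<And>n. n \<ge> N \<Longrightarrow> c \<le> s0 n" "\<And>n. n \<ge> N \<Longrightarrow> \<rho> \<le> sqrt (l (n + 1) / l n)"
      "\<And>n. n \<ge> N \<Longrightarrow> sqrt (l (n + 1) / l n) \<le> R"
      "\<And>n. n \<ge> N \<Longrightarrow> \<bar>\<kappa> n\<bar> / sqrt (l n) \<le> K"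
      using N by blast+
    have "\<exists>M. \<forall>n \<ge> N + 2. x n / sqrt (l n) \<le> M"
      by (rule one_dir[OF l_pos s1_nonneg sm1_nonneg S0 Na(1,2) c(1) Na(3)
          \<rho>(1) Na(4) R(1) Na(5) K(1) Na(6) C0 Cx rec])
    then obtain M where M: "\<forall>n \<ge> N + 2. x n / sqrt (l n) \<le> M" by blast
    have "\<forall>\<^sub>F n in sequentially. ereal (x n / sqrt (l n)) \<le> ereal M"
      using M unfolding eventually_sequentially by auto
    then have lsM: "limsup (\<lambda>n. ereal (x n / sqrt (l n))) \<le> ereal M" by (rule Limsup_bounded)
    show "limsup (\<lambda>n. ereal (x n / sqrt (l n))) < \<infinity>"
      by (rule order_le_less_trans[OF lsM]) simp
  next
    assume "limsup (\<lambda>n. ereal (x n / sqrt (l n))) < \<infinity>"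
    from ev_upper[OF this] obtain B where
      B: "B \<ge> 0" "\<forall>\<^sub>F n in sequentially. x n / sqrt (l n) \<le> B" by blast
    from eventually_conj[OF ev B(2)] obtain N where
      N: "\<And>n. n \<ge> N \<Longrightarrow> (s1 n \<le> S \<and> sm1 n \<le> S \<and> c \<le> s0 n \<and>
      \<rho> \<le> sqrt (l (n + 1) / l n) \<and> sqrt (l (n + 1) / l n) \<le> R \<and>
      \<bar>\<kappa> n\<bar> / sqrt (l n) \<le> K \<and> n \<ge> 1) \<and> x n / sqrt (l n) \<le> B"
      unfolding eventually_sequentially by blast
    have Cx: "- B * sqrt (l n) \<le> - x n" if "n \<ge> N" for n
    proof -
      have ln: "l n > 0" using N[OF that] l_pos by blast
      have "x n \<le> B * sqrt (l n)" using N[OF that] ln by (simp add: pos_divide_le_eq)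
      then show ?thesis by simp
    qed
    have rec': "l n = (- x n) * (s1 n * (- x (n + 1)) + s0 n * (- x n) + sm1 n * (- x (n - 1)))
        + (- \<kappa> n) * (- x n)" if "n \<ge> 1" for n
      using rec[OF that] by (simp add: algebra_simps)
    have Na: "\<And>n. n \<ge> N \<Longrightarrow> s1 n \<le> S" "\<And>n. n \<ge> N \<Longrightarrow> sm1 n \<le> S"
      "\<And>n. n \<ge> N \<Longrightarrow> c \<le> s0 n" "\<And>n. n \<ge> N \<Longrightarrow> \<rho> \<le> sqrt (l (n + 1) / l n)"
      "\<And>n. n \<ge> N \<Longrightarrow> sqrt (l (n + 1) / l n) \<le> R"
      "\<And>n. n \<ge> N \<Longrightarrow> \<bar>\<kappa> n\<bar> / sqrt (l n) \<le> K"
      using N by blast+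
    have Nk: "\<And>n. n \<ge> N \<Longrightarrow> \<bar>- \<kappa> n\<bar> / sqrt (l n) \<le> K" using Na(6) by simp
    have "\<exists>M. \<forall>n \<ge> N + 2. (- x n) / sqrt (l n) \<le> M"
      by (rule one_dir[OF l_pos s1_nonneg sm1_nonneg S0 Na(1,2) c(1) Na(3)
          \<rho>(1) Na(4) R(1) Na(5) K(1) Nk B(1) Cx rec'])
    then obtain M where M: "\<forall>n \<ge> N + 2. (- x n) / sqrt (l n) \<le> M" by blast
    have "\<forall>\<^sub>F n in sequentially. ereal (- M) \<le> ereal (x n / sqrt (l n))"
      unfolding eventually_sequentially
    proof (intro exI allI impI)
      fix n assume "N + 2 \<le> n"
      then have "(- x n) / sqrt (l n) \<le> M" using M by blast
      then show "ereal (- M) \<le> ereal (x n / sqrt (l n))" by simp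
    qed
    then have liM: "ereal (- M) \<le> liminf (\<lambda>n. ereal (x n / sqrt (l n)))" by (rule Liminf_bounded)
    show "liminf (\<lambda>n. ereal (x n / sqrt (l n))) > -\<infinity>"
      by (rule order_less_le_trans[OF _ liM]) simp
  qed
qed

end
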